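(* Let $\pi/2\le\alpha<\pi$ and $\Omega_\alpha=\{w:\ \frac{\alpha-\pi}{2\sin\alpha}<\mathrm{Re}\,w<\frac{\alpha}{2\sin\alpha}\}$. Let $f=h+\overline{g}\in\mathcal{S}_H^0$ map $\mathbb{D}$ onto $\Omega_\alpha$, with dilatation $\omega=g'/h'=b^2$ where $b(z)=\varepsilon z$, $\varepsilon\in\{1,-1\}$. Let $S$ be the minimal surface over $\Omega_\alpha$ with projection $f$, i.e. $S=\{(u(z),v(z),F(z)):z\in\mathbb{D}\}$ with $u=\mathrm{Re}\,f$, $v=\mathrm{Im}\,f$, $F(z)=\mathrm{Re}\int_0^z2ib(t)h'(t)\,dt+c$, $c\in\mathbb{R}$. Then $$u=\frac{1}{2\sin\alpha}\mathrm{Im}\left[\log\left(\frac{1+ze^{i\alpha}}{1+ze^{-i\alpha}}\right)\right],$$ $$v=\begin{cases}\mathrm{Im}\left(\dfrac{z}{z^2+1}\right)&\text{if }\alpha=\pi/2,\\[2mm] \dfrac{1}{2\cos\alpha}\mathrm{Im}\left[\log\left(\dfrac{(1+ze^{i\alpha})(1+ze^{-i\alpha})}{z^2+1}\right)\right]&\text{if }\pi/2<\alpha<\pi,\end{cases}$$ $$F=\begin{cases}\pm\mathrm{Im}\left(\dfrac{1}{z^2+1}\right)+c&\text{if }\alpha=\pi/2,\\[2mm] \pm\mathrm{Re}\left[\dfrac{1}{2\cos\alpha}\log\left(\dfrac{z+i}{z-i}\right)-\dfrac{1}{\sin2\alpha}\log\left(\dfrac{z+e^{i\alpha}}{z+e^{-i\alpha}}\right)\right]+c&\text{if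 }\pi/2<\alpha<\pi,\end{cases}$$ where the sign $\pm$ corresponds to $\varepsilon$ and $c$ is a real constant.
   Context: $\mathbb{D}$ is the unit disk. A harmonic mapping $f=h+\overline g$ ($h,g$ analytic on $\mathbb{D}$) is sense-preserving if $h'\ne0$ and its dilatation $\omega=g'/h'$ satisfies $|\omega|<1$. $\mathcal{S}_H^0$ is the class of sense-preserving univalent harmonic mappings $f=h+\overline g$ on $\mathbb{D}$ with $h(0)=g(0)=0$, $h'(0)=1$, $g'(0)=0$. Minimal surface with projection $f$ (Weierstrass–Enneper): $S=\{(\mathrm{Re}\int_0^z\phi_1+c_1,\mathrm{Re}\int_0^z\phi_2+c_2,\mathrm{Re}\int_0^z\phi_3+c_3)\}$ with $\phi_j$ analytic, $\phi_1^2+\phi_2^2+\phi_3^2=0$, $f=\mathrm{Re}\int_0^z\phi_1+i\,\mathrm{Re}\int_0^z\phi_2$ univalent sense-preserving harmonic onto the domain; for $\omega=b^2$, $b(z)=\pm z$, one has $\phi_1=h'+g'$, $\phi_2=-i(h'-g')$, $\phi_3=2ibh'$. Logarithms denote analytic branches on $\mathbb{D}$. *)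

theory Defs
  imports "HOL-Complex_Analysis.Complex_Analysis"
begin

definition sense_preserving_harm :: "(complex \<Rightarrow> complex) \<Rightarrow> (complex \<Rightarrow> complex) \<Rightarrow> bool" where
  "sense_preserving_harm h g \<longleftrightarrow>
     (\<forall>z\<in>ball 0 1. deriv h z \<noteq> 0 \<and> norm (deriv g z / deriv h z) < 1)"

definition in_SH0 :: "(complex \<Rightarrow> complex) \<Rightarrow> (complex \<Rightarrow> complex) \<Rightarrow> bool" where
  "in_SH0 h g \<longleftrightarrow>
     h holomorphic_on ball 0 1 \<and> g holomorphic_on ball 0 1 \<and>
     h 0 = 0 \<and> g 0 = 0 \<and> deriv h 0 = 1 \<and> deriv g 0 = 0 \<and>
     sense_preserving_harm h g \<and>
     inj_on (\<lambda>z. h z + cnj (g z)) (ball 0 1)"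

definition Omega :: "real \<Rightarrow> complex set" where
  "Omega \<alpha> = {w. (\<alpha> - pi) / (2 * sin \<alpha>) < Re w \<and> Re w < \<alpha> / (2 * sin \<alpha>)}"

end

theory Submission
  imports Defs
begin

lemma strip_norm:
  assumes a1: "pi/2 \<le> \<alpha>" and a2: "\<alpha> < pi" and w: "w \<in> Omega \<alpha>"
  shows "norm (exp (2 * \<i> * of_real (sin \<alpha>) * w) - 1)
       < norm (exp (\<i> * of_real \<alpha>) - exp (2 * \<i> * of_real (sin \<alpha>) * w) * exp (- \<i> * of_real \<alpha>))"
proof -
  define s where "s = sin \<alpha>"
  have s0: "s > 0" unfolding s_def using a1 a2 by (intro sin_gt_zero) auto
  define r where "r = exp (- 2 * s * Im w)"
  define \<theta> where "\<theta> = 2 * s * Re w"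
  have E: "exp (2 * \<i> * of_real s * w) = r * cis \<theta>"
    unfolding r_def \<theta>_def by (subst exp_eq_polar) simp
  have th: "\<alpha> - pi < \<theta>" "\<theta> < \<alpha>"
    using w s0 unfolding Omega_def \<theta>_def s_def[symmetric]
    by (auto simp: field_simps)
  have sn: "sin (\<theta> - \<alpha>) < 0"
  proof -
    have "sin (\<alpha> - \<theta>) > 0" using th by (intro sin_gt_zero) auto
    then show ?thesis by (metis neg_0_less_iff_less sin_minus minus_diff_eq)
  qed
  have r0: "r > 0" unfolding r_def by simp
  have cth: "cos \<theta> = cos (\<theta> - \<alpha>) * cos \<alpha> - sin (\<theta> - \<alpha>) * sin \<alpha>"
    using cos_add[of "\<theta> - \<alpha>" \<alpha>] by simp
  have key: "cos \<alpha> * cos (\<theta> - \<alpha>) + sin \<alpha> * sin (\<theta> - \<alpha>) < cos \<theta>"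
  proof -
    have "sin \<alpha> * sin (\<theta> - \<alpha>) < 0" using sn s0 unfolding s_def by (simp add: mult_pos_neg)
    then show ?thesis using cth by (simp add: algebra_simps)
  qed
  have "(norm (r * cis \<theta> - 1))^2 < (norm (cis \<alpha> - r * cis \<theta> * cis (-\<alpha>)))^2"
  proof -
    have L: "(norm (r * cis \<theta> - 1))^2 = r^2 - 2*r * cos \<theta> + 1"
    proof -
      have "(norm (r * cis \<theta> - 1))^2 = (r * cos \<theta> - 1)^2 + (r * sin \<theta>)^2"
        by (simp add: cmod_power2)
      also have "\<dots> = r^2*((cos \<theta>)^2 + (sin \<theta>)^2) - 2*r * cos \<theta> + 1"
        by (simp add: power2_eq_square algebra_simps del: sin_cos_squared_add sin_cos_squared_add2 sin_cos_squared_add3)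
      finally show ?thesis by simp
    qed
    have R: "(norm (cis \<alpha> - r * cis \<theta> * cis (-\<alpha>)))^2
       = 1 - 2 * r * (cos \<alpha> * cos (\<theta> - \<alpha>) + sin \<alpha> * sin (\<theta> - \<alpha>)) + r^2"
    proof -
      have eq: "r * cis \<theta> * cis (-\<alpha>) = r * cis (\<theta> - \<alpha>)" by (simp add: cis_mult)
      have "(norm (cis \<alpha> - r * cis \<theta> * cis (-\<alpha>)))^2
          = (cos \<alpha> - r * cos (\<theta> - \<alpha>))^2 + (sin \<alpha> - r * sin (\<theta> - \<alpha>))^2"
        unfolding eq by (simp add: cmod_power2)
      also have "\<dots> = ((cos \<alpha>)^2 + (sin \<alpha>)^2) - 2 * r * (cos \<alpha> * cos (\<theta> - \<alpha>) + sin \<alpha> * sin (\<theta> - \<alpha>))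
             + r^2 * ((cos (\<theta> - \<alpha>))^2 + (sin (\<theta> - \<alpha>))^2)"
        by (simp add: power2_eq_square algebra_simps del: sin_cos_squared_add sin_cos_squared_add2 sin_cos_squared_add3)
      finally show ?thesis by simp
    qed
    have "r * (cos \<alpha> * cos (\<theta> - \<alpha>) + sin \<alpha> * sin (\<theta> - \<alpha>)) < r * cos \<theta>"
      by (rule mult_strict_left_mono[OF key r0])
    then show ?thesis unfolding L R by linarith
  qed
  then have "norm (r * cis \<theta> - 1) < norm (cis \<alpha> - r * cis \<theta> * cis (-\<alpha>))"
    using power2_less_imp_less by fastforce
  then show ?thesis using E unfolding s_def by (simp add: cis_conv_exp)
qed

lemma exp_diff_sin: "exp (\<i> * of_real a) - exp (- \<i> * of_real a) = 2 * \<i> * of_real (sin a)"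
  by (simp add: complex_eq_iff exp_eq_polar cis.code)

lemma strip_ident:
  assumes a1: "pi/2 \<le> \<alpha>" and a2: "\<alpha> < pi"
    and hol: "\<psi> holomorphic_on ball 0 1" and p0: "\<psi> 0 = 0" and d0: "deriv \<psi> 0 = 1"
    and img: "\<forall>z\<in>ball 0 1. \<psi> z \<in> Omega \<alpha>"
  shows "\<forall>z\<in>ball 0 1. exp (2 * \<i> * of_real (sin \<alpha>) * \<psi> z) * (1 + z * exp (- \<i> * of_real \<alpha>))
            = 1 + z * exp (\<i> * of_real \<alpha>)"
proof -
  define ea where "ea = exp (\<i> * of_real \<alpha>)"
  define eb where "eb = exp (- \<i> * of_real \<alpha>)"
  define s where "s = sin \<alpha>"
  have s0: "s > 0" unfolding s_def using a1 a2 by (intro sin_gt_zero) auto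
  define f where "f = (\<lambda>z. (exp (2 * \<i> * of_real s * \<psi> z) - 1) / (ea - exp (2 * \<i> * of_real s * \<psi> z) * eb))"
  have lt: "norm (exp (2 * \<i> * of_real s * \<psi> z) - 1) < norm (ea - exp (2 * \<i> * of_real s * \<psi> z) * eb)"
    if "z \<in> ball 0 1" for z
    using strip_norm[OF a1 a2, of "\<psi> z"] img that unfolding ea_def eb_def s_def by auto
  have den: "ea - exp (2 * \<i> * of_real s * \<psi> z) * eb \<noteq> 0" if "z \<in> ball 0 1" for z
    using lt[OF that] by auto
  have holf: "f holomorphic_on ball 0 1"
    unfolding f_def using den by (intro holomorphic_intros hol) auto
  have f0: "f 0 = 0" unfolding f_def by (simp add: p0)
  have nf: "norm (f z) < 1" if "norm z < 1" for z
    using lt[of z] den[of z] that unfolding f_def by (simp add: norm_divide divide_less_eq)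
  have eab: "ea - eb = 2 * \<i> * of_real s" unfolding ea_def eb_def s_def by (rule exp_diff_sin)
  have dpsi: "(\<psi> has_field_derivative deriv \<psi> z) (at z)" if "z \<in> ball 0 1" for z
    using hol that by (intro holomorphic_derivI) auto
  have s0': "s \<noteq> 0" using s0 by simp
  have sne: "of_real s \<noteq> (0::complex)" using s0 by simp
  have fd: "(f has_field_derivative 1) (at 0)"
    unfolding f_def
    by (rule derivative_eq_intros dpsi refl | simp add: p0 d0 eab sne s0')+
  have df: "deriv f 0 = 1" using fd by (rule DERIV_imp_deriv)
  obtain \<beta> where b: "\<forall>z. norm z < 1 \<longrightarrow> f z = \<beta> * z"
    using Schwarz_Lemma(3)[OF holf f0 nf, of 0] df by auto
  have "((\<lambda>z. \<beta> * z) has_field_derivative 1) (at 0)"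
    using fd by (rule has_field_derivative_transform_within_open[of _ _ _ "ball 0 1"]) (use b in auto)
  moreover have "((\<lambda>z. \<beta> * z) has_field_derivative \<beta>) (at 0)" by (auto intro!: derivative_eq_intros)
  ultimately have b1: "\<beta> = 1" using DERIV_unique by blast
  show ?thesis
  proof
    fix z :: complex assume z: "z \<in> ball 0 1"
    then have "f z = z" using b b1 by auto
    then have "exp (2 * \<i> * of_real s * \<psi> z) - 1 = z * (ea - exp (2 * \<i> * of_real s * \<psi> z) * eb)"
      using den[OF z] unfolding f_def by (simp add: divide_eq_eq)
    then show "exp (2 * \<i> * of_real (sin \<alpha>) * \<psi> z) * (1 + z * exp (- \<i> * of_real \<alpha>)) = 1 + z * exp (\<i> * of_real \<alpha>)"
      unfolding ea_def[symmetric] eb_def[symmetric] s_def[symmetric] by (simp add: algebra_simps)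
  qed
qed

lemma re_pos: assumes "norm z < 1" "norm k = 1" shows "Re (1 + z * k) > 0"
proof -
  have "\<bar>Re (z * k)\<bar> \<le> norm (z * k)" by (rule abs_Re_le_cmod)
  also have "\<dots> = norm z" using assms by (simp add: norm_mult)
  finally show ?thesis using assms by auto
qed

lemma re_pos_slit: "Re w > 0 \<Longrightarrow> w \<notin> \<real>\<^sub>\<le>\<^sub>0"
  by (auto simp: complex_nonpos_Reals_iff)

lemma C_ne: fixes z :: complex assumes "norm z < 1" shows "z^2 + 1 \<noteq> 0"
proof
  assume "z^2 + 1 = 0"
  then have "z^2 = -1" by (simp add: eq_neg_iff_add_eq_0)
  then have "norm (z^2) = 1" by simp
  then have "norm z = 1" using norm_ge_zero[of z] by (auto simp: norm_power power2_eq_1_iff)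
  then show False using assms by simp
qed

lemma ea_eb: "exp (\<i> * of_real a) * exp (- \<i> * of_real a) = 1"
  by (simp flip: exp_add)

lemma ea_plus: "exp (\<i> * of_real a) + exp (- \<i> * of_real a) = 2 * of_real (cos a)"
  by (simp add: complex_eq_iff exp_eq_polar cis.code)

lemma norm_ea: "norm (exp (\<i> * of_real a)) = 1" "norm (exp (- \<i> * of_real a)) = 1"
  by simp_all

lemma real_aux:
  fixes q x y :: real
  assumes "q \<ge> 1/2" "x = q * (1 + x^2 - y^2)" "y = q * (2*x*y)" "x^2 + y^2 < 1"
  shows False
proof (cases "y = 0")
  case True
  then have "x = q * (1 + x^2)" using assms by simp
  moreover have "(q - 1/2) * (1 + x^2) \<ge> 0" by (intro mult_nonneg_nonneg) (use assms(1) in auto)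
  then have "q * (1 + x^2) \<ge> (1 + x^2)/2" by (simp add: algebra_simps)
  ultimately have "(1 - x)^2 \<le> 0" by (simp add: power2_eq_square algebra_simps)
  then have "x = 1" by simp
  then show False using assms True by simp
next
  case False
  then have x: "2*q*x = 1" using assms(3) by (metis mult.assoc mult.commute mult_cancel_left2)
  have "q * y^2 = q + q*x^2 - x" using assms(2) by (simp add: algebra_simps)
  also have "\<dots> = q + q*x^2 - 2*q*x*x" using x by simp
  finally have "q * (x^2 + y^2) = q * 1" by (simp add: power2_eq_square algebra_simps)
  then have "x^2 + y^2 = 1" using assms(1) by simp
  then show False using assms by simp
qed

lemma slit_v:
  fixes z :: complex
  assumes z: "norm z < 1" and co: "-1 \<le> co" "co < 0"
  shows "(1 + 2 * of_real co * z + z^2) / (z^2 + 1) \<notin> \<real>\<^sub>\<le>\<^sub>0"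
proof
  assume H: "(1 + 2 * of_real co * z + z^2) / (z^2 + 1) \<in> \<real>\<^sub>\<le>\<^sub>0"
  have C: "z^2 + 1 \<noteq> 0" using C_ne[OF z] .
  define w where "w = z / (z^2 + 1)"
  have eq: "(1 + 2 * of_real co * z + z^2) / (z^2 + 1) = 1 + 2 * of_real co * w"
    unfolding w_def using C by (simp add: field_simps)
  have "Im (2 * of_real co * w) = 0" "Re (1 + 2 * of_real co * w) \<le> 0"
    using H unfolding eq complex_nonpos_Reals_iff by auto
  then have imw: "Im w = 0" and rew: "1 + 2 * co * Re w \<le> 0" using co by auto
  define q where "q = Re w"
  have qh: "q \<ge> 1/2"
  proof -
    have "2 * co * q \<le> -1" using rew q_def by simp
    then have "2 * (-co) * q \<ge> 1" by simp
    moreover have "-co \<le> 1" using co by simp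
    ultimately show ?thesis
    proof (intro leI notI)
      assume q1: "q < 1/2" and h1: "2 * (-co) * q \<ge> 1" and h2: "-co \<le> 1"
      have "(2 * (-co)) * q < (2 * (-co)) * (1/2)" using co q1 by (intro mult_strict_left_mono) auto
      then show False using h1 h2 by simp
    qed
  qed
  have wq: "w = of_real q" using imw q_def by (simp add: complex_eq_iff)
  have zq: "z = of_real q * (z^2 + 1)" using C wq unfolding w_def by (simp add: field_simps)
  have "Re z = q * (1 + (Re z)^2 - (Im z)^2)" "Im z = q * (2 * Re z * Im z)"
  proof -
    have e1: "Re z = Re (of_real q * (z^2 + 1))" "Im z = Im (of_real q * (z^2 + 1))"
      using zq by (metis)+
    have e2: "Re (of_real q * (z^2 + 1)) = q * (1 + (Re z)^2 - (Im z)^2)"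
         "Im (of_real q * (z^2 + 1)) = q * (2 * Re z * Im z)"
      by (simp_all add: Re_power2 Im_power2)
    show "Re z = q * (1 + (Re z)^2 - (Im z)^2)" "Im z = q * (2 * Re z * Im z)"
      by (rule trans[OF e1(1) e2(1)], rule trans[OF e1(2) e2(2)])
  qed
  moreover have "(Re z)^2 + (Im z)^2 < 1"
    using z by (metis cmod_power2 power_strict_mono norm_ge_zero one_power2 zero_less_numeral)
  ultimately show False using real_aux qh by blast
qed

lemma eq_by_deriv:
  fixes z :: complex
  assumes "\<And>z. z \<in> ball 0 1 \<Longrightarrow> (K has_field_derivative D z) (at z)"
    and "\<And>z. z \<in> ball 0 1 \<Longrightarrow> (G has_field_derivative D z) (at z)"
    and "K 0 = G 0" and "z \<in> ball 0 (1::real)"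
  shows "K z = (G z :: complex)"
proof -
  have "\<exists>c. \<forall>x\<in>ball 0 1. K x - G x = c"
  proof (rule has_field_derivative_zero_constant)
    fix x :: complex assume x: "x \<in> ball 0 1"
    have "((\<lambda>x. K x - G x) has_field_derivative (D x - D x)) (at x)"
      using assms(1)[OF x] assms(2)[OF x] by (rule derivative_intros)
    then show "((\<lambda>x. K x - G x) has_field_derivative 0) (at x within ball 0 1)"
      by (simp add: has_field_derivative_at_within)
  qed simp
  then obtain c where "\<forall>x\<in>ball 0 1. K x - G x = c" by blast
  then have "K z - G z = K 0 - G 0" using assms(4) by simp
  then show ?thesis using assms(3) by simp
qed

lemma cint:
  fixes z :: complex
  assumes "\<And>t. t \<in> ball 0 1 \<Longrightarrow> (H has_field_derivative f t) (at t)" and "z \<in> ball 0 (1::real)"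
  shows "contour_integral (linepath 0 z) f = H z - H 0"
proof -
  have "(f has_contour_integral (H (pathfinish (linepath 0 z)) - H (pathstart (linepath 0 z)))) (linepath 0 z)"
  proof (rule contour_integral_primitive[where S = "ball 0 1"])
    show "\<And>x. x \<in> ball 0 1 \<Longrightarrow> (H has_field_derivative f x) (at x within ball 0 1)"
      using assms(1) by (simp add: has_field_derivative_at_within)
    show "path_image (linepath 0 z) \<subseteq> ball 0 1"
      using assms(2) by (simp add: closed_segment_subset)
    show "valid_path (linepath 0 z)" by (rule valid_path_linepath)
  qed
  then show ?thesis by (simp add: contour_integral_unique)
qed

lemma dLn:
  assumes "norm (w::complex) < 1" "norm k = 1"
  shows "((\<lambda>t. Ln (1 + t * k)) has_field_derivative k / (1 + w * k)) (at w)"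
proof -
  have sl: "1 + w * k \<notin> \<real>\<^sub>\<le>\<^sub>0" using re_pos[OF assms] by (rule re_pos_slit)
  have "((\<lambda>t. Ln (1 + t * k)) has_field_derivative inverse (1 + w * k) * k) (at w)"
    by (rule DERIV_chain2[where g = "\<lambda>t. 1 + t * k" and x = w, OF has_field_derivative_Ln[OF sl]])
       (auto intro!: derivative_eq_intros)
  then show ?thesis by (simp add: field_simps)
qed

lemma alg1:
  fixes C P k X :: complex
  assumes "C \<noteq> 0" "P \<noteq> 0" "k \<noteq> 0"
  shows "(1 / (2 * k)) * (inverse (P / C) * (2 * k * X / C^2)) = X / (P * C)"
  using assms by (simp add: field_simps power2_eq_square)

lemma re_i_div: "Re (\<i> * complex_of_real e / w) = - e * Im (1 / w)"
  by (simp add: Re_divide Im_divide)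

lemma alg3:
  fixes C P k S e w :: complex
  assumes "C \<noteq> 0" "P \<noteq> 0" "k \<noteq> 0" "S \<noteq> 0" "P = C + 2 * k * w"
  shows "e * ((- 1 / (2 * k)) * (- 2 * \<i> / C) + (1 / (2 * S * k)) * (- 2 * \<i> * S / P))
       = 2 * \<i> * (e * w) * (1 / (P * C))"
proof -
  have "e * ((- 1 / (2 * k)) * (- 2 * \<i> / C) + (1 / (2 * S * k)) * (- 2 * \<i> * S / P))
      = e * \<i> * (P - C) / (k * P * C)" using assms(1-4) by (simp add: field_simps)
  also have "\<dots> = e * \<i> * (2 * k * w) / (k * P * C)" using assms(5) by simp
  also have "\<dots> = 2 * \<i> * (e * w) * (1 / (P * C))" using assms(1-4) by (simp add: field_simps)
  finally show ?thesis .
qed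

theorem theorem3p2:
  fixes \<alpha> \<epsilon> c :: real and h g :: "complex \<Rightarrow> complex" and F :: "complex \<Rightarrow> real"
  assumes "pi / 2 \<le> \<alpha>" and "\<alpha> < pi"
    and "\<epsilon> \<in> {1, -1}"
    and "in_SH0 h g"
    and "(\<lambda>z. h z + cnj (g z)) ` ball 0 1 = Omega \<alpha>"
    and "\<forall>z\<in>ball 0 1. deriv g z / deriv h z = (complex_of_real \<epsilon> * z) ^ 2"
    and "\<forall>z\<in>ball 0 1. F z =
           Re (contour_integral (linepath 0 z) (\<lambda>t. 2 * \<i> * (complex_of_real \<epsilon> * t) * deriv h t)) + c"
  shows "\<forall>z\<in>ball 0 1.
     Re (h z + cnj (g z)) =
       1 / (2 * sin \<alpha>) * Im (Ln ((1 + z * exp (\<i> * of_real \<alpha>)) / (1 + z * exp (- \<i> * of_real \<alpha>))))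
   \<and> Im (h z + cnj (g z)) =
       (if \<alpha> = pi / 2 then Im (z / (z ^ 2 + 1))
        else 1 / (2 * cos \<alpha>) *
          Im (Ln ((1 + z * exp (\<i> * of_real \<alpha>)) * (1 + z * exp (- \<i> * of_real \<alpha>)) / (z ^ 2 + 1))))
   \<and> F z =
       (if \<alpha> = pi / 2 then \<epsilon> * Im (1 / (z ^ 2 + 1)) + c
        else - \<epsilon> * Re (of_real (1 / (2 * cos \<alpha>)) * Ln ((z + \<i>) / (z - \<i>))
                       - of_real (1 / sin (2 * \<alpha>)) * Ln ((z + exp (\<i> * of_real \<alpha>)) / (z + exp (- \<i> * of_real \<alpha>))))
             + c)"
proof -
  note a1 = assms(1) and a2 = assms(2)
  define ea where "ea = exp (\<i> * of_real \<alpha>)"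
  define eb where "eb = exp (- \<i> * of_real \<alpha>)"
  define s where "s = sin \<alpha>"
  define co where "co = cos \<alpha>"
  have s0: "s > 0" unfolding s_def using a1 a2 by (intro sin_gt_zero) auto
  have eab: "ea - eb = 2 * \<i> * of_real s" unfolding ea_def eb_def s_def by (rule exp_diff_sin)
  have eab1: "ea * eb = 1" unfolding ea_def eb_def by (rule ea_eb)
  have eap: "ea + eb = 2 * of_real co" unfolding ea_def eb_def co_def by (rule ea_plus)
  have nea: "norm ea = 1" "norm eb = 1" unfolding ea_def eb_def by simp_all
  have co_sin: "co = - sin (\<alpha> - pi/2)" unfolding co_def by (simp add: sin_diff)
  have co_le: "co \<le> 0" unfolding co_sin using a1 a2 by (simp add: sin_ge_zero)
  have co_lt: "co < 0" if "\<alpha> \<noteq> pi/2" unfolding co_sin using a1 a2 that by (simp add: sin_gt_zero)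
  have co_ge: "-1 \<le> co" unfolding co_def by simp
  from assms(4) have hh: "h holomorphic_on ball 0 1" and gh: "g holomorphic_on ball 0 1"
    and h0: "h 0 = 0" and g0: "g 0 = 0" and dh0: "deriv h 0 = 1" and dg0: "deriv g 0 = 0"
    and sp: "sense_preserving_harm h g"
    unfolding in_SH0_def by auto
  have dh: "(h has_field_derivative deriv h z) (at z)" if "z \<in> ball 0 1" for z
    using hh that by (intro holomorphic_derivI) auto
  have dg: "(g has_field_derivative deriv g z) (at z)" if "z \<in> ball 0 1" for z
    using gh that by (intro holomorphic_derivI) auto
  have hne: "deriv h z \<noteq> 0" if "z \<in> ball 0 1" for z
    using sp that unfolding sense_preserving_harm_def by auto
  have eps2: "of_real \<epsilon> * of_real \<epsilon> = (1::complex)" using assms(3) by auto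
  have dgz: "deriv g z = z^2 * deriv h z" if "z \<in> ball 0 1" for z
  proof -
    have "deriv g z = (of_real \<epsilon> * z)^2 * deriv h z"
      using assms(6) that hne[OF that] by (simp add: divide_eq_eq)
    also have "\<dots> = (of_real \<epsilon> * of_real \<epsilon>) * z^2 * deriv h z" by (simp add: power2_eq_square algebra_simps)
    finally show ?thesis using eps2 by simp
  qed
  define \<psi> where "\<psi> = (\<lambda>z. h z + g z)"
  have hpsi: "\<psi> holomorphic_on ball 0 1" unfolding \<psi>_def by (intro holomorphic_intros hh gh)
  have p0: "\<psi> 0 = 0" unfolding \<psi>_def using h0 g0 by simp
  have dpsi: "(\<psi> has_field_derivative (deriv h z + deriv g z)) (at z)" if "z \<in> ball 0 1" for z
    unfolding \<psi>_def using dh[OF that] dg[OF that] by (rule derivative_intros)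
  have d0: "deriv \<psi> 0 = 1" using DERIV_imp_deriv[OF dpsi[of 0]] dh0 dg0 by simp
  have Ref: "Re (h z + cnj (g z)) = Re (\<psi> z)" for z unfolding \<psi>_def by simp
  have Imf: "Im (h z + cnj (g z)) = Im (h z - g z)" for z by simp
  have img: "\<forall>z\<in>ball 0 1. \<psi> z \<in> Omega \<alpha>"
  proof
    fix z :: complex assume "z \<in> ball 0 1"
    then have "h z + cnj (g z) \<in> Omega \<alpha>" using assms(5) by blast
    then show "\<psi> z \<in> Omega \<alpha>" using Ref[of z] unfolding Omega_def by simp
  qed
  have key: "exp (2 * \<i> * of_real s * \<psi> z) * (1 + z * eb) = 1 + z * ea" if "z \<in> ball 0 1" for z
    using strip_ident[OF a1 a2 hpsi p0 d0 img] that unfolding ea_def eb_def s_def by auto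
  have Bre: "Re (1 + z * eb) > 0" "Re (1 + z * ea) > 0"
    if "z \<in> ball 0 1" for z
    using re_pos[of z eb] re_pos[of z ea] nea that by auto
  have Bne: "1 + z * eb \<noteq> 0" "1 + z * ea \<noteq> 0" if "z \<in> ball 0 1" for z
    using Bre[OF that] by (metis less_irrefl zero_complex.sel(1))+
  have Cne: "z^2 + 1 \<noteq> 0" if "z \<in> ball 0 1" for z :: complex using C_ne[of z] that by simp
  have U: "Re (h z + cnj (g z)) = 1 / (2 * s) * Im (Ln ((1 + z * ea) / (1 + z * eb)))" if z: "z \<in> ball 0 1" for z
  proof -
    define Q where "Q = (1 + z * ea) / (1 + z * eb)"
    have Qne: "Q \<noteq> 0" unfolding Q_def using Bne[OF z] by simp
    have "exp (2 * \<i> * of_real s * \<psi> z) = exp (Ln Q)"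
      using key[OF z] Bne[OF z] Qne unfolding Q_def by (simp add: field_simps)
    then obtain n :: int where n: "2 * \<i> * of_real s * \<psi> z = Ln Q + of_int (2 * n) * pi * \<i>"
      by (auto simp: exp_eq)
    have imeq: "2 * s * Re (\<psi> z) = Im (Ln Q) + 2 * n * pi"
      using arg_cong[OF n, of Im] by simp
    have om: "(\<alpha> - pi) / (2 * s) < Re (\<psi> z)" "Re (\<psi> z) < \<alpha> / (2 * s)"
      using img z unfolding Omega_def s_def by auto
    have b1: "\<alpha> - pi < 2 * s * Re (\<psi> z)" "2 * s * Re (\<psi> z) < \<alpha>"
      using om s0 by (simp_all add: field_simps)
    have b2: "-pi < Im (Ln Q)" "Im (Ln Q) \<le> pi" using mpi_less_Im_Ln[OF Qne] Im_Ln_le_pi[OF Qne] by auto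
    have lo: "-pi < n * pi" and hi: "n * pi < pi" using b1 b2 imeq a1 a2 by linarith+
    have n1: "real_of_int n < 1"
    proof (rule ccontr)
      assume "\<not> real_of_int n < 1"
      then have "1 * pi \<le> n * pi" by (intro mult_right_mono) auto
      with hi show False by simp
    qed
    have n2: "real_of_int n > -1"
    proof (rule ccontr)
      assume "\<not> real_of_int n > -1"
      then have "n * pi \<le> (-1) * pi" by (intro mult_right_mono) auto
      with lo show False by simp
    qed
    from n1 n2 have "n = 0" by linarith
    then have "Re (\<psi> z) = Im (Ln Q) / (2 * s)" using imeq s0 by (simp add: field_simps)
    then show ?thesis using Ref[of z] unfolding Q_def by simp
  qed
  have dpsi2: "deriv h z + deriv g z = 1 / ((1 + z * ea) * (1 + z * eb))" if z: "z \<in> ball 0 1" for z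
  proof -
    define E where "E = (\<lambda>w. exp (2 * \<i> * of_real s * \<psi> w))"
    have E1: "(E has_field_derivative (2 * \<i> * of_real s * (deriv h z + deriv g z)) * E z) (at z)"
      unfolding E_def
      by (rule derivative_eq_intros dpsi[OF z] refl | simp add: algebra_simps)+
    have E2: "((\<lambda>w. (1 + w * ea) / (1 + w * eb)) has_field_derivative (2 * \<i> * of_real s * (deriv h z + deriv g z)) * E z) (at z)"
      using E1
    proof (rule has_field_derivative_transform_within_open[of _ _ _ "ball 0 1"])
      fix w :: complex assume w: "w \<in> ball 0 1"
      show "E w = (1 + w * ea) / (1 + w * eb)"
        using key[OF w] Bne[OF w] unfolding E_def by (simp add: field_simps)
    qed (use z in auto)
    have bz: "1 + eb * z \<noteq> 0" using Bne[OF z] by (simp add: mult.commute)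
    have E3: "((\<lambda>w. (1 + w * ea) / (1 + w * eb)) has_field_derivative (ea - eb) / (1 + z * eb)^2) (at z)"
      by (rule derivative_eq_intros refl | simp add: Bne[OF z] bz field_simps power2_eq_square)+
    have "(2 * \<i> * of_real s * (deriv h z + deriv g z)) * E z = (ea - eb) / (1 + z * eb)^2"
      using DERIV_unique[OF E2 E3] .
    moreover have "E z = (1 + z * ea) / (1 + z * eb)"
      using key[OF z] Bne[OF z] unfolding E_def by (simp add: field_simps)
    ultimately have e1: "(2 * \<i> * of_real s) * (deriv h z + deriv g z) * ((1 + z * ea) / (1 + z * eb))
        = (2 * \<i> * of_real s) / (1 + z * eb)^2"
      unfolding eab by simp
    have "(2 * \<i> * of_real s) * (deriv h z + deriv g z) * (1 + z * ea) * (1 + z * eb)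
        = ((2 * \<i> * of_real s) * (deriv h z + deriv g z) * ((1 + z * ea) / (1 + z * eb))) * (1 + z * eb)^2"
      using Bne[OF z] by (simp add: field_simps power2_eq_square)
    also have "\<dots> = (2 * \<i> * of_real s) * 1" using e1 Bne[OF z] by simp
    finally have "(2 * \<i> * of_real s) * ((deriv h z + deriv g z) * ((1 + z * ea) * (1 + z * eb)))
        = (2 * \<i> * of_real s) * 1" by (simp add: algebra_simps)
    then have "(deriv h z + deriv g z) * ((1 + z * ea) * (1 + z * eb)) = 1"
      using s0 by (subst (asm) mult_cancel_left) simp
    moreover have "(1 + z * ea) * (1 + z * eb) \<noteq> 0" using Bne[OF z] by simp
    ultimately show ?thesis by (simp add: eq_divide_eq)
  qed
  have ABeq: "(1 + z * ea) * (1 + z * eb) = 1 + 2 * of_real co * z + z^2" for z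
  proof -
    have "(1 + z * ea) * (1 + z * eb) = 1 + z * (ea + eb) + z^2 * (ea * eb)"
      by (simp add: algebra_simps power2_eq_square)
    then show ?thesis unfolding eap eab1 by (simp add: algebra_simps)
  qed
  define P where "P = (\<lambda>z::complex. 1 + 2 * of_real co * z + z^2)"
  have Pne: "P z \<noteq> 0" if "z \<in> ball 0 1" for z
    using Bne[OF that] ABeq[of z] unfolding P_def by (metis mult_eq_0_iff)
  have dhz: "deriv h z = 1 / (P z * (z^2 + 1))" if z: "z \<in> ball 0 1" for z
  proof -
    have "deriv h z * (z^2 + 1) = 1 / P z"
      using dpsi2[OF z] dgz[OF z] ABeq[of z] unfolding P_def by (simp add: algebra_simps)
    then have "deriv h z * (z^2 + 1) * P z = 1" using Pne[OF z] by simp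
    then have "deriv h z * (P z * (z^2 + 1)) = 1" by (simp add: algebra_simps)
    moreover have "P z * (z^2 + 1) \<noteq> 0" using Cne[OF z] Pne[OF z] by simp
    ultimately show ?thesis by (simp add: eq_divide_eq)
  qed
  have dK: "((\<lambda>z. h z - g z) has_field_derivative (1 - z^2) / (P z * (z^2 + 1))) (at z)"
    if z: "z \<in> ball 0 1" for z
  proof -
    have "((\<lambda>z. h z - g z) has_field_derivative deriv h z - deriv g z) (at z)"
      using dh[OF z] dg[OF z] by (rule derivative_intros)
    moreover have "deriv h z - deriv g z = (1 - z^2) / (P z * (z^2 + 1))"
    proof -
      have "deriv h z - deriv g z = (1 - z^2) * deriv h z" using dgz[OF z] by (simp add: algebra_simps)
      then show ?thesis using dhz[OF z] by simp
    qed
    ultimately show ?thesis by simp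
  qed
  have K0: "h 0 - g 0 = 0" using h0 g0 by simp
  have Fz: "F z = Re (contour_integral (linepath 0 z) (\<lambda>t. 2 * \<i> * (complex_of_real \<epsilon> * t) * deriv h t)) + c"
    if "z \<in> ball 0 1" for z using assms(7) that by blast
  show ?thesis
  proof (intro ballI conjI)
    fix z :: complex assume z: "z \<in> ball 0 1"
    show "Re (h z + cnj (g z)) =
       1 / (2 * sin \<alpha>) * Im (Ln ((1 + z * exp (\<i> * of_real \<alpha>)) / (1 + z * exp (- \<i> * of_real \<alpha>))))"
      using U[OF z] unfolding ea_def eb_def s_def by simp
    show "Im (h z + cnj (g z)) =
       (if \<alpha> = pi / 2 then Im (z / (z ^ 2 + 1))
        else 1 / (2 * cos \<alpha>) *
          Im (Ln ((1 + z * exp (\<i> * of_real \<alpha>)) * (1 + z * exp (- \<i> * of_real \<alpha>)) / (z ^ 2 + 1))))"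
    proof (cases "\<alpha> = pi / 2")
      case True
      then have co0: "co = 0" unfolding co_def True by simp
      have "h z - g z = z / (z^2 + 1)"
      proof (rule eq_by_deriv[OF dK _ _ z])
        fix w :: complex assume w: "w \<in> ball 0 1"
        have cw: "w^2 + 1 \<noteq> 0" "1 + w^2 \<noteq> 0" "1 + w * w \<noteq> 0" "w * w + 1 \<noteq> 0"
          using Cne[OF w] by (simp_all add: add.commute power2_eq_square)
        show "((\<lambda>z. z / (z^2 + 1)) has_field_derivative (1 - w^2) / (P w * (w^2 + 1))) (at w)"
          unfolding P_def co0
          by (rule derivative_eq_intros refl | simp add: cw field_simps power2_eq_square)+
      next
        show "h 0 - g 0 = 0 / (0^2 + 1)" using h0 g0 by simp
      qed
      then show ?thesis using True Imf[of z] by simp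
    next
      case False
      have coN: "co < 0" using co_lt[OF False] .
      have coz: "of_real co \<noteq> (0::complex)" using coN by simp
      define G where "G = (\<lambda>w. of_real (1 / (2 * co)) * Ln (P w / (w^2 + 1)))"
      have "h z - g z = G z"
      proof (rule eq_by_deriv[OF dK _ _ z])
        fix w :: complex assume w: "w \<in> ball 0 1"
        have cw: "w^2 + 1 \<noteq> 0" "1 + w^2 \<noteq> 0" "1 + w * w \<noteq> 0" "w * w + 1 \<noteq> 0"
          using Cne[OF w] by (simp_all add: add.commute power2_eq_square)
        have sl: "P w / (w^2 + 1) \<notin> \<real>\<^sub>\<le>\<^sub>0" unfolding P_def
          using slit_v[of w co] w coN co_ge by simp
        have dQ: "((\<lambda>w. P w / (w^2 + 1)) has_field_derivative 2 * of_real co * (1 - w^2) / (w^2 + 1)^2) (at w)"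
          unfolding P_def
          by (rule derivative_eq_intros refl | simp add: cw field_simps power2_eq_square)+
        have "(G has_field_derivative of_real (1 / (2 * co)) * (inverse (P w / (w^2 + 1)) * (2 * of_real co * (1 - w^2) / (w^2 + 1)^2))) (at w)"
          unfolding G_def by (intro DERIV_cmult DERIV_chain2[OF has_field_derivative_Ln[OF sl] dQ])
        moreover have "of_real (1 / (2 * co)) * (inverse (P w / (w^2 + 1)) * (2 * of_real co * (1 - w^2) / (w^2 + 1)^2))
            = (1 - w^2) / (P w * (w^2 + 1))"
          using alg1[OF cw(1) Pne[OF w] coz, of "1 - w^2"] by simp
        ultimately show "(G has_field_derivative (1 - w^2) / (P w * (w^2 + 1))) (at w)" by simp
      next
        show "h 0 - g 0 = G 0" using h0 g0 unfolding G_def P_def by simp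
      qed
      moreover have "(1 + z * ea) * (1 + z * eb) = P z"
        using ABeq[of z] unfolding P_def by simp
      ultimately show ?thesis using False Imf[of z]
        unfolding ea_def[symmetric] eb_def[symmetric] co_def[symmetric] G_def by simp
    qed
    show "F z = (if \<alpha> = pi / 2 then \<epsilon> * Im (1 / (z ^ 2 + 1)) + c
        else - \<epsilon> * Re (of_real (1 / (2 * cos \<alpha>)) * Ln ((z + \<i>) / (z - \<i>))
                       - of_real (1 / sin (2 * \<alpha>)) * Ln ((z + exp (\<i> * of_real \<alpha>)) / (z + exp (- \<i> * of_real \<alpha>))))
             + c)"
    proof (cases "\<alpha> = pi / 2")
      case True
      then have co0: "co = 0" unfolding co_def True by simp
      define H where "H = (\<lambda>t. - \<i> * of_real \<epsilon> / (t^2 + 1))"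
      have "contour_integral (linepath 0 z) (\<lambda>t. 2 * \<i> * (complex_of_real \<epsilon> * t) * deriv h t) = H z - H 0"
      proof (rule cint[OF _ z])
        fix w :: complex assume w: "w \<in> ball 0 1"
        have cw: "w^2 + 1 \<noteq> 0" "1 + w^2 \<noteq> 0" "1 + w * w \<noteq> 0" "w * w + 1 \<noteq> 0"
          using Cne[OF w] by (simp_all add: add.commute power2_eq_square)
        have "(H has_field_derivative 2 * \<i> * (of_real \<epsilon> * w) / ((w^2 + 1) * (w^2 + 1))) (at w)"
          unfolding H_def
          by (rule derivative_eq_intros refl | simp add: cw field_simps power2_eq_square)+
        moreover have "deriv h w = 1 / ((w^2 + 1) * (w^2 + 1))"
          using dhz[OF w] unfolding P_def co0 by (simp add: add.commute)
        ultimately show "(H has_field_derivative 2 * \<i> * (of_real \<epsilon> * w) * deriv h w) (at w)"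
          by simp
      qed
      then show ?thesis using Fz[OF z] True unfolding H_def by (simp add: re_i_div)
    next
      case False
      have coN: "co < 0" using co_lt[OF False] .
      have coz: "of_real co \<noteq> (0::complex)" using coN by simp
      have sz: "of_real s \<noteq> (0::complex)" using s0 by simp
      have s2: "sin (2 * \<alpha>) = 2 * s * co" unfolding s_def co_def by (rule sin_double)
      define H where "H = (\<lambda>t. of_real \<epsilon> * (of_real (- 1 / (2 * co)) * (Ln (1 + t * (- \<i>)) - Ln (1 + t * \<i>))
          + of_real (1 / sin (2 * \<alpha>)) * (Ln (1 + t * eb) - Ln (1 + t * ea))))"
      have ci: "contour_integral (linepath 0 z) (\<lambda>t. 2 * \<i> * (complex_of_real \<epsilon> * t) * deriv h t) = H z - H 0"
      proof (rule cint[OF _ z])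
        fix w :: complex assume w: "w \<in> ball 0 1"
        have nw: "norm w < 1" using w by simp
        have ni: "norm (- \<i>) = 1" "norm \<i> = 1" by simp_all
        have d1: "((\<lambda>t. Ln (1 + t * (- \<i>)) - Ln (1 + t * \<i>)) has_field_derivative
                   (- \<i>) / (1 + w * (- \<i>)) - \<i> / (1 + w * \<i>)) (at w)"
          by (intro DERIV_diff dLn nw ni)
        have d2: "((\<lambda>t. Ln (1 + t * eb) - Ln (1 + t * ea)) has_field_derivative
                   eb / (1 + w * eb) - ea / (1 + w * ea)) (at w)"
          by (intro DERIV_diff dLn nw nea)
        have dH: "(H has_field_derivative of_real \<epsilon> * (of_real (- 1 / (2 * co)) * ((- \<i>) / (1 + w * (- \<i>)) - \<i> / (1 + w * \<i>))
              + of_real (1 / sin (2 * \<alpha>)) * (eb / (1 + w * eb) - ea / (1 + w * ea)))) (at w)"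
          unfolding H_def by (intro DERIV_cmult DERIV_add d1 d2)
        have nz1: "1 + w * (- \<i>) \<noteq> 0" "1 + w * \<i> \<noteq> 0"
          using re_pos[OF nw ni(1)] re_pos[OF nw ni(2)] by (metis less_irrefl zero_complex.sel(1))+
        have e1: "(- \<i>) / (1 + w * (- \<i>)) - \<i> / (1 + w * \<i>) = - 2 * \<i> / (w^2 + 1)"
        proof -
          have den: "(1 + w * (- \<i>)) * (1 + w * \<i>) = w^2 + 1" by (simp add: algebra_simps power2_eq_square)
          have num: "(- \<i>) * (1 + w * \<i>) - \<i> * (1 + w * (- \<i>)) = - 2 * \<i>" by (simp add: algebra_simps)
          show ?thesis unfolding diff_frac_eq[OF nz1] den num ..
        qed
        have e2: "eb / (1 + w * eb) - ea / (1 + w * ea) = - 2 * \<i> * of_real s / P w"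
        proof -
          have den: "(1 + w * eb) * (1 + w * ea) = P w" using ABeq[of w] unfolding P_def by (simp add: mult.commute)
          have num: "eb * (1 + w * ea) - ea * (1 + w * eb) = - 2 * \<i> * of_real s"
            using eab by (simp add: algebra_simps)
          show ?thesis unfolding diff_frac_eq[OF Bne(1)[OF w] Bne(2)[OF w]] den num ..
        qed
        have Pw: "P w = (w^2 + 1) + 2 * of_real co * w" unfolding P_def by (simp add: algebra_simps)
        have "of_real \<epsilon> * (of_real (- 1 / (2 * co)) * ((- \<i>) / (1 + w * (- \<i>)) - \<i> / (1 + w * \<i>))
              + of_real (1 / sin (2 * \<alpha>)) * (eb / (1 + w * eb) - ea / (1 + w * ea)))
            = 2 * \<i> * (of_real \<epsilon> * w) * (1 / (P w * (w^2 + 1)))"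
          unfolding e1 e2 s2 using alg3[OF Cne[OF w] Pne[OF w] coz sz Pw, of "of_real \<epsilon>"] by simp
        then show "(H has_field_derivative 2 * \<i> * (of_real \<epsilon> * w) * deriv h w) (at w)"
          using dH dhz[OF w] by simp
      qed
      have nz: "1 + z * (- \<i>) \<noteq> 0" "1 + z * \<i> \<noteq> 0"
      proof -
        have "Re (1 + z * (- \<i>)) > 0" "Re (1 + z * \<i>) > 0"
          using re_pos[of z "- \<i>"] re_pos[of z \<i>] z by simp_all
        then show "1 + z * (- \<i>) \<noteq> 0" "1 + z * \<i> \<noteq> 0" by (metis less_irrefl zero_complex.sel(1))+
      qed
      have nzab: "1 + z * ea \<noteq> 0" "1 + z * eb \<noteq> 0" using Bne[OF z] by auto
      have H0: "H 0 = 0" unfolding H_def by simp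
      have T2: "Re (H z) = \<epsilon> * ((- 1 / (2 * co)) * (ln (norm (1 + z * (- \<i>))) - ln (norm (1 + z * \<i>)))
          + (1 / sin (2 * \<alpha>)) * (ln (norm (1 + z * eb)) - ln (norm (1 + z * ea))))"
        unfolding H_def using nz nzab by simp
      have zi1: "z + \<i> = \<i> * (1 + z * (- \<i>))" "z - \<i> = (- \<i>) * (1 + z * \<i>)"
        by (simp_all add: algebra_simps)
      have za1: "z + ea = ea * (1 + z * eb)" "z + eb = eb * (1 + z * ea)"
        using eab1 by (simp_all add: algebra_simps)
      have R1: "Re (Ln ((z + \<i>) / (z - \<i>))) = ln (norm (1 + z * (- \<i>))) - ln (norm (1 + z * \<i>))"
        unfolding zi1 using nz by (simp add: norm_divide norm_mult ln_div)
      have R2: "Re (Ln ((z + ea) / (z + eb))) = ln (norm (1 + z * eb)) - ln (norm (1 + z * ea))"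
      proof -
        have "ea \<noteq> 0" "eb \<noteq> 0" using nea by auto
        then show ?thesis unfolding za1 using nzab nea by (simp add: norm_divide norm_mult ln_div)
      qed
      have T: "Re (of_real (1 / (2 * co)) * Ln ((z + \<i>) / (z - \<i>))
                 - of_real (1 / sin (2 * \<alpha>)) * Ln ((z + ea) / (z + eb)))
          = (1 / (2 * co)) * (ln (norm (1 + z * (- \<i>))) - ln (norm (1 + z * \<i>)))
            - (1 / sin (2 * \<alpha>)) * (ln (norm (1 + z * eb)) - ln (norm (1 + z * ea)))"
        by (simp only: minus_complex.sel times_complex.sel Re_complex_of_real Im_complex_of_real R1 R2)
      have "F z = Re (H z) + c" using Fz[OF z] ci H0 by simp
      then have G: "F z = - \<epsilon> * Re (of_real (1 / (2 * co)) * Ln ((z + \<i>) / (z - \<i>))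
                 - of_real (1 / sin (2 * \<alpha>)) * Ln ((z + ea) / (z + eb))) + c"
        unfolding T T2 by (simp add: algebra_simps)
      show ?thesis using False G
        unfolding ea_def[symmetric] eb_def[symmetric] co_def[symmetric] by simp
    qed
  qed
qed

end
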